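(* Let $B$ be a Banach left $A$-module having a bounded left approximate identity $(e_\alpha)_\alpha\subseteq A$, and let $b'\in wap_\ell(B)$. Then $\pi_\ell^*(b',e_\alpha)\to b'$ in the weak topology $\sigma(B^*,B^{**})$.
   Context: $A$ is a Banach algebra and $B$ a Banach left $A$-module with action $\pi_\ell(a,b)=ab$. A bounded left approximate identity for $B$ is a bounded net $(e_\alpha)\subseteq A$ with $e_\alpha a\to a$ for all $a\in A$ and $e_\alpha b\to b$ (in norm) for all $b\in B$. For a bounded bilinear $m:X\times Y\to Z$: $m^*:Z^*\times X\to Y^*$, $\langle m^*(z',x),y\rangle=\langle z',m(x,y)\rangle$; $m^{**}:Y^{**}\times Z^*\to X^*$, $\langle m^{**}(y'',z'),x\rangle=\langle y'',m^*(z',x)\rangle$; $m^{***}:X^{**}\times Y^{**}\to Z^{**}$, $\langle m^{***}(x'',y''),z'\rangle=\langle x'',m^{**}(y'',z')\rangle$; $m^t(y,x)=m(x,y)$, $m^{t***t}(x'',y'')=(m^t)^{***}(y'',x'')$. $wap_\ell(B)=\{b'\in B^*:\langle\pi_\ell^{***}(a'',b''),b'\rangle=\langle\pi_\ell^{t***t}(a'',b''),b'\rangle$ for all $a''\in A^{**},b''\in B^{**}\}$. *)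

theory Defs
  imports "HOL-Analysis.Analysis"
begin

(* Dual spaces are the real Banach duals: X^* = X =>L real. *)

definition adj1 :: "('x::real_normed_vector \<Rightarrow> 'y::real_normed_vector \<Rightarrow> 'z::real_normed_vector)
    \<Rightarrow> ('z \<Rightarrow>\<^sub>L real) \<Rightarrow> 'x \<Rightarrow> ('y \<Rightarrow>\<^sub>L real)" where
  "adj1 m z' x = Blinfun (\<lambda>y. blinfun_apply z' (m x y))"

definition adj2 :: "('x::real_normed_vector \<Rightarrow> 'y::real_normed_vector \<Rightarrow> 'z::real_normed_vector)
    \<Rightarrow> (('y \<Rightarrow>\<^sub>L real) \<Rightarrow>\<^sub>L real) \<Rightarrow> ('z \<Rightarrow>\<^sub>L real) \<Rightarrow> ('x \<Rightarrow>\<^sub>L real)" where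
  "adj2 m y'' z' = Blinfun (\<lambda>x. blinfun_apply y'' (adj1 m z' x))"

definition adj3 :: "('x::real_normed_vector \<Rightarrow> 'y::real_normed_vector \<Rightarrow> 'z::real_normed_vector)
    \<Rightarrow> (('x \<Rightarrow>\<^sub>L real) \<Rightarrow>\<^sub>L real) \<Rightarrow> (('y \<Rightarrow>\<^sub>L real) \<Rightarrow>\<^sub>L real)
    \<Rightarrow> (('z \<Rightarrow>\<^sub>L real) \<Rightarrow>\<^sub>L real)" where
  "adj3 m x'' y'' = Blinfun (\<lambda>z'. blinfun_apply x'' (adj2 m y'' z'))"

definition transp_map :: "('x \<Rightarrow> 'y \<Rightarrow> 'z) \<Rightarrow> 'y \<Rightarrow> 'x \<Rightarrow> 'z" where
  "transp_map m y x = m x y"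

definition adj3_tt :: "('x::real_normed_vector \<Rightarrow> 'y::real_normed_vector \<Rightarrow> 'z::real_normed_vector)
    \<Rightarrow> (('x \<Rightarrow>\<^sub>L real) \<Rightarrow>\<^sub>L real) \<Rightarrow> (('y \<Rightarrow>\<^sub>L real) \<Rightarrow>\<^sub>L real)
    \<Rightarrow> (('z \<Rightarrow>\<^sub>L real) \<Rightarrow>\<^sub>L real)" where
  "adj3_tt m x'' y'' = adj3 (transp_map m) y'' x''"

definition wap_l :: "('a::real_normed_vector \<Rightarrow> 'b::real_normed_vector \<Rightarrow> 'b) \<Rightarrow> ('b \<Rightarrow>\<^sub>L real) set" where
  "wap_l p = {b'. \<forall>a'' b''. blinfun_apply (adj3 p a'' b'') b' = blinfun_apply (adj3_tt p a'' b'') b'}"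

definition directed_preorder :: "('i \<Rightarrow> 'i \<Rightarrow> bool) \<Rightarrow> bool" where
  "directed_preorder le \<longleftrightarrow> (\<forall>i. le i i) \<and> (\<forall>i j k. le i j \<longrightarrow> le j k \<longrightarrow> le i k)
     \<and> (\<forall>i j. \<exists>k. le i k \<and> le j k)"

definition net_tendsto :: "('i \<Rightarrow> 'i \<Rightarrow> bool) \<Rightarrow> ('i \<Rightarrow> 'x::metric_space) \<Rightarrow> 'x \<Rightarrow> bool" where
  "net_tendsto le x l \<longleftrightarrow> (\<forall>\<epsilon>>0. \<exists>i0. \<forall>i. le i0 i \<longrightarrow> dist (x i) l < \<epsilon>)"

definition banach_left_module :: "('a::real_normed_algebra \<Rightarrow> 'b::real_normed_vector \<Rightarrow> 'b) \<Rightarrow> bool" where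
  "banach_left_module p \<longleftrightarrow> bounded_bilinear p
     \<and> (\<forall>a1 a2 b. p (a1 * a2) b = p a1 (p a2 b))
     \<and> (\<forall>a b. norm (p a b) \<le> norm a * norm b)"

definition bounded_left_approx_identity ::
  "('a::real_normed_algebra \<Rightarrow> 'b::real_normed_vector \<Rightarrow> 'b) \<Rightarrow> ('i \<Rightarrow> 'i \<Rightarrow> bool) \<Rightarrow> ('i \<Rightarrow> 'a) \<Rightarrow> bool" where
  "bounded_left_approx_identity p le e \<longleftrightarrow>
     (\<exists>M. \<forall>i. norm (e i) \<le> M)
     \<and> (\<forall>a. net_tendsto le (\<lambda>i. e i * a) a)
     \<and> (\<forall>b. net_tendsto le (\<lambda>i. p (e i) b) b)"

end

theory Submission
  imports Defs
begin

lemma adj1_apply: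
  assumes "bounded_bilinear m"
  shows "blinfun_apply (adj1 m z' x) y = blinfun_apply z' (m x y)"
proof -
  have "bounded_linear (\<lambda>y. blinfun_apply z' (m x y))"
    using bounded_linear_compose[OF blinfun.bounded_linear_right bounded_bilinear.bounded_linear_right[OF assms]] .
  then show ?thesis unfolding adj1_def by (simp add: bounded_linear_Blinfun_apply)
qed

lemma adj1_norm:
  assumes "bounded_bilinear m"
  obtains K where "K \<ge> 0" "\<And>z' x. norm (adj1 m z' x) \<le> norm z' * K * norm x"
proof -
  obtain K where K: "K \<ge> 0" "\<And>a b. norm (m a b) \<le> norm a * norm b * K"
    using bounded_bilinear.nonneg_bounded[OF assms] by blast
  have "norm (adj1 m z' x) \<le> norm z' * K * norm x" for z' x
  proof (rule norm_blinfun_bound)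
    show "0 \<le> norm z' * K * norm x" using K by simp
    fix y
    have "norm (blinfun_apply (adj1 m z' x) y) = norm (blinfun_apply z' (m x y))"
      by (simp add: plus_blinfun.rep_eq scaleR_blinfun.rep_eq adj1_apply[OF assms])
    also have "\<dots> \<le> norm z' * norm (m x y)" by (rule norm_blinfun)
    also have "\<dots> \<le> norm z' * (norm x * norm y * K)"
      by (rule mult_left_mono[OF K(2)]) simp
    finally show "norm (blinfun_apply (adj1 m z' x) y) \<le> norm z' * K * norm x * norm y"
      by (simp add: mult_ac)
  qed
  then show ?thesis using that K by blast
qed

lemma adj1_linear:
  assumes "bounded_bilinear m"
  shows "bounded_linear (adj1 m z')"
proof -
  obtain K where K: "K \<ge> 0" "\<And>z' x. norm (adj1 m z' x) \<le> norm z' * K * norm x"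
    using adj1_norm[OF assms] by blast
  show ?thesis
  proof (rule bounded_linear_intro[where K="norm z' * K"])
    fix x y show "adj1 m z' (x + y) = adj1 m z' x + adj1 m z' y"
      by (rule blinfun_eqI) (simp add: plus_blinfun.rep_eq scaleR_blinfun.rep_eq adj1_apply[OF assms] bounded_bilinear.add_left[OF assms] blinfun.add_right)
  next
    fix r x show "adj1 m z' (r *\<^sub>R x) = r *\<^sub>R adj1 m z' x"
      by (rule blinfun_eqI) (simp add: plus_blinfun.rep_eq scaleR_blinfun.rep_eq adj1_apply[OF assms] bounded_bilinear.scaleR_left[OF assms] blinfun.scaleR_right)
  next
    fix x show "norm (adj1 m z' x) \<le> norm x * (norm z' * K)"
      using K(2)[of z' x] by (simp add: mult_ac)
  qed
qed

lemma adj2_apply: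
  assumes "bounded_bilinear m"
  shows "blinfun_apply (adj2 m y'' z') x = blinfun_apply y'' (adj1 m z' x)"
proof -
  have "bounded_linear (\<lambda>x. blinfun_apply y'' (adj1 m z' x))"
    using bounded_linear_compose[OF blinfun.bounded_linear_right adj1_linear[OF assms]] .
  then show ?thesis unfolding adj2_def by (simp add: bounded_linear_Blinfun_apply)
qed

lemma adj2_linear:
  assumes "bounded_bilinear m"
  shows "bounded_linear (adj2 m y'')"
proof -
  obtain K where K: "K \<ge> 0" "\<And>z' x. norm (adj1 m z' x) \<le> norm z' * K * norm x"
    using adj1_norm[OF assms] by blast
  have nb: "norm (adj2 m y'' z') \<le> norm y'' * norm z' * K" for z'
  proof (rule norm_blinfun_bound)
    show "0 \<le> norm y'' * norm z' * K" using K by simp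
    fix x
    have "norm (blinfun_apply (adj2 m y'' z') x) = norm (blinfun_apply y'' (adj1 m z' x))"
      by (simp add: plus_blinfun.rep_eq scaleR_blinfun.rep_eq adj2_apply[OF assms])
    also have "\<dots> \<le> norm y'' * norm (adj1 m z' x)" by (rule norm_blinfun)
    also have "\<dots> \<le> norm y'' * (norm z' * K * norm x)"
      by (rule mult_left_mono[OF K(2)]) simp
    finally show "norm (blinfun_apply (adj2 m y'' z') x) \<le> norm y'' * norm z' * K * norm x"
      by (simp add: mult_ac)
  qed
  have a1add: "adj1 m (z1 + z2) x = adj1 m z1 x + adj1 m z2 x" for z1 z2 x
    by (rule blinfun_eqI) (simp add: plus_blinfun.rep_eq scaleR_blinfun.rep_eq adj1_apply[OF assms] blinfun.add_left)
  have a1sc: "adj1 m (r *\<^sub>R z) x = r *\<^sub>R adj1 m z x" for r z x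
    by (rule blinfun_eqI) (simp add: plus_blinfun.rep_eq scaleR_blinfun.rep_eq adj1_apply[OF assms])
  show ?thesis
  proof (rule bounded_linear_intro[where K="norm y'' * K"])
    fix x y show "adj2 m y'' (x + y) = adj2 m y'' x + adj2 m y'' y"
      by (rule blinfun_eqI) (simp add: plus_blinfun.rep_eq scaleR_blinfun.rep_eq adj2_apply[OF assms] a1add blinfun.add_right)
  next
    fix r x show "adj2 m y'' (r *\<^sub>R x) = r *\<^sub>R adj2 m y'' x"
      by (rule blinfun_eqI) (simp add: plus_blinfun.rep_eq scaleR_blinfun.rep_eq adj2_apply[OF assms] a1sc blinfun.scaleR_right)
  next
    fix x show "norm (adj2 m y'' x) \<le> norm x * (norm y'' * K)"
      using nb[of x] by (simp add: mult_ac)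
  qed
qed

lemma adj3_apply:
  assumes "bounded_bilinear m"
  shows "blinfun_apply (adj3 m x'' y'') z' = blinfun_apply x'' (adj2 m y'' z')"
proof -
  have "bounded_linear (\<lambda>z'. blinfun_apply x'' (adj2 m y'' z'))"
    using bounded_linear_compose[OF blinfun.bounded_linear_right adj2_linear[OF assms]] .
  then show ?thesis unfolding adj3_def by (simp add: bounded_linear_Blinfun_apply)
qed

lemma small_zero:
  fixes x :: real
  assumes "K \<ge> 0" "\<And>d. d > 0 \<Longrightarrow> \<bar>x\<bar> \<le> K * d"
  shows "x = 0"
proof (rule ccontr)
  assume "x \<noteq> 0"
  then have "\<bar>x\<bar> > 0" by simp
  define d where "d = \<bar>x\<bar> / (2 * (K + 1))"
  have d: "d > 0" using \<open>\<bar>x\<bar> > 0\<close> assms(1) by (simp add: d_def)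
  have "K * d < \<bar>x\<bar>"
  proof -
    have "K * d \<le> (K + 1) * d" using d by simp
    also have "\<dots> = \<bar>x\<bar> / 2" using assms(1) by (simp add: d_def field_simps)
    also have "\<dots> < \<bar>x\<bar>" using \<open>\<bar>x\<bar> > 0\<close> by simp
    finally show ?thesis .
  qed
  with assms(2)[OF d] show False by simp
qed

lemma cluster_point:
  fixes e :: "'i \<Rightarrow> 'a::real_normed_vector"
  assumes dir: "directed_preorder le" and bd: "\<forall>i. norm (e i) \<le> M"
    and cof: "\<forall>i0. \<exists>i. le i0 i \<and> P i"
  obtains E where "bounded_linear E"
    "\<And>i0 (F::('a \<Rightarrow>\<^sub>L real) set) \<delta>. finite F \<Longrightarrow> \<delta> > 0 \<Longrightarrow>
            (\<exists>i. le i0 i \<and> P i \<and> (\<forall>\<phi>\<in>F. \<bar>blinfun_apply \<phi> (e i) - E \<phi>\<bar> < \<delta>))"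
proof -
  have M0: "M \<ge> 0" using bd norm_ge_zero order_trans by blast
  define X where "X = (\<lambda>\<phi>::'a \<Rightarrow>\<^sub>L real. subtopology euclidean {-(M*norm \<phi>)..M*norm \<phi>})"
  define T where "T = product_topology X UNIV"
  define ev where "ev i = (\<lambda>\<phi>::'a \<Rightarrow>\<^sub>L real. blinfun_apply \<phi> (e i))" for i
  have topT: "f \<in> topspace T \<longleftrightarrow> (\<forall>\<phi>. \<bar>f \<phi>\<bar> \<le> M * norm \<phi>)" for f
  proof -
    have "f \<in> topspace T \<longleftrightarrow> (\<forall>\<phi>. f \<phi> \<in> {-(M*norm \<phi>)..M*norm \<phi>})"
      by (simp add: T_def X_def PiE_UNIV_domain Pi_iff)
    also have "\<dots> \<longleftrightarrow> (\<forall>\<phi>. \<bar>f \<phi>\<bar> \<le> M * norm \<phi>)"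
      by (simp add: abs_le_iff minus_le_iff conj_commute)
    finally show ?thesis .
  qed
  have ev_top: "ev i \<in> topspace T" for i
  proof -
    have "\<bar>blinfun_apply \<phi> (e i)\<bar> \<le> M * norm \<phi>" for \<phi>
    proof -
      have "\<bar>blinfun_apply \<phi> (e i)\<bar> \<le> norm \<phi> * norm (e i)" using norm_blinfun[of \<phi> "e i"] by simp
      also have "\<dots> \<le> norm \<phi> * M" using bd by (simp add: mult_left_mono)
      finally show ?thesis by (simp add: mult_ac)
    qed
    then show ?thesis by (simp add: topT ev_def)
  qed
  have cT: "compact_space T"
    unfolding T_def compact_space_product_topology X_def
    by (auto intro: compact_space_subtopology)
  define C where "C i0 = T closure_of (ev ` {i. le i0 i \<and> P i})" for i0
  have ub: "finite I0 \<Longrightarrow> \<exists>k. \<forall>i\<in>I0. le i k" for I0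
  proof (induction I0 rule: finite_induct)
    case empty then show ?case by simp
  next
    case (insert x I0)
    then obtain k where k: "\<forall>i\<in>I0. le i k" by blast
    obtain k' where "le x k'" "le k k'" using dir unfolding directed_preorder_def by blast
    then show ?case using k dir unfolding directed_preorder_def by blast
  qed
  have h1: "\<forall>c\<in>range C. closedin T c" by (auto simp: C_def)
  have h2: "\<forall>\<F>. finite \<F> \<and> \<F> \<subseteq> range C \<longrightarrow> \<Inter>\<F> \<noteq> {}"
  proof (intro allI impI)
    fix \<F> assume "finite \<F> \<and> \<F> \<subseteq> range C"
    then obtain I0 where I0: "finite I0" "\<F> = C ` I0" by (meson finite_subset_image)
    obtain k where k: "\<forall>i\<in>I0. le i k" using ub[OF I0(1)] by blast
    obtain j where j: "le k j" "P j" using cof by blast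
    have "ev j \<in> C i0" if "i0 \<in> I0" for i0
    proof -
      have "le i0 j" using k that j dir unfolding directed_preorder_def by blast
      then have "ev j \<in> ev ` {i. le i0 i \<and> P i}" using j by blast
      moreover have "ev ` {i. le i0 i \<and> P i} \<subseteq> topspace T" using ev_top by blast
      ultimately show ?thesis unfolding C_def using closure_of_subset by blast
    qed
    then show "\<Inter>\<F> \<noteq> {}" using I0 by blast
  qed
  have "\<Inter>(range C) \<noteq> {}" using compact_space_fip[THEN iffD1, OF cT] h1 h2 by blast
  then obtain E where E: "\<And>i0. E \<in> C i0" by blast
  have Etop: "E \<in> topspace T" using E[of undefined] closure_of_subset_topspace[of T] unfolding C_def by blast
  have opn: "finite F \<Longrightarrow> openin T {f \<in> topspace T. \<forall>\<phi>\<in>F. \<bar>f \<phi> - E \<phi>\<bar> < \<delta>}" for F \<delta>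
  proof (induction F rule: finite_induct)
    case empty then show ?case by simp
  next
    case (insert \<psi> F)
    have c: "continuous_map T (X \<psi>) (\<lambda>f. f \<psi>)"
      unfolding T_def by (rule continuous_map_product_projection) simp
    have o1: "openin (X \<psi>) (ball (E \<psi>) \<delta> \<inter> {-(M*norm \<psi>)..M*norm \<psi>})"
      unfolding X_def openin_subtopology by auto
    have "openin T {f \<in> topspace T. f \<psi> \<in> ball (E \<psi>) \<delta> \<inter> {-(M*norm \<psi>)..M*norm \<psi>}}"
      by (rule openin_continuous_map_preimage[OF c o1])
    moreover have "{f \<in> topspace T. f \<psi> \<in> ball (E \<psi>) \<delta> \<inter> {-(M*norm \<psi>)..M*norm \<psi>}}
        = {f \<in> topspace T. \<bar>f \<psi> - E \<psi>\<bar> < \<delta>}"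
    proof -
      have "f \<psi> \<in> {-(M*norm \<psi>)..M*norm \<psi>}" if "f \<in> topspace T" for f
      proof -
        have "\<bar>f \<psi>\<bar> \<le> M*norm \<psi>" using topT[of f] that by blast
        then show ?thesis using abs_le_D1 abs_le_D2 by fastforce
      qed
      then show ?thesis by (auto simp: dist_real_def abs_minus_commute)
    qed
    ultimately have "openin T {f \<in> topspace T. \<bar>f \<psi> - E \<psi>\<bar> < \<delta>}" by simp
    from openin_Int[OF this insert.IH]
    have "openin T ({f \<in> topspace T. \<bar>f \<psi> - E \<psi>\<bar> < \<delta>} \<inter> {f \<in> topspace T. \<forall>\<phi>\<in>F. \<bar>f \<phi> - E \<phi>\<bar> < \<delta>})" .
    moreover have "{f \<in> topspace T. \<forall>\<phi>\<in>insert \<psi> F. \<bar>f \<phi> - E \<phi>\<bar> < \<delta>} =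
       {f \<in> topspace T. \<bar>f \<psi> - E \<psi>\<bar> < \<delta>} \<inter> {f \<in> topspace T. \<forall>\<phi>\<in>F. \<bar>f \<phi> - E \<phi>\<bar> < \<delta>}"
      by blast
    ultimately show ?case by simp
  qed
  have approx: "\<exists>i. le i0 i \<and> P i \<and> (\<forall>\<phi>\<in>F. \<bar>blinfun_apply \<phi> (e i) - E \<phi>\<bar> < \<delta>)"
    if F: "finite F" and d: "\<delta> > 0" for i0 F \<delta>
  proof -
    define U where "U = {f \<in> topspace T. \<forall>\<phi>\<in>F. \<bar>f \<phi> - E \<phi>\<bar> < \<delta>}"
    have EU: "E \<in> U" using Etop d by (simp add: U_def)
    have oU: "openin T U" unfolding U_def by (rule opn[OF F])
    have "\<forall>V. E \<in> V \<and> openin T V \<longrightarrow> (\<exists>y. y \<in> ev ` {i. le i0 i \<and> P i} \<and> y \<in> V)"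
      using E[of i0] unfolding C_def in_closure_of by (rule conjunct2)
    then obtain y where y: "y \<in> ev ` {i. le i0 i \<and> P i}" "y \<in> U"
      using EU oU by blast
    then obtain i where "le i0 i" "P i" "y = ev i" by blast
    then show ?thesis using y(2) by (auto simp: ev_def U_def)
  qed
  have Eadd: "E (\<phi> + \<psi>) = E \<phi> + E \<psi>" for \<phi> \<psi>
  proof -
    have "E (\<phi> + \<psi>) - (E \<phi> + E \<psi>) = 0"
    proof (rule small_zero[of 3])
      fix d :: real assume "d > 0"
      then obtain i where i: "\<forall>\<theta>\<in>{\<phi>, \<psi>, \<phi> + \<psi>}. \<bar>blinfun_apply \<theta> (e i) - E \<theta>\<bar> < d"
        using approx[of "{\<phi>, \<psi>, \<phi> + \<psi>}" d undefined] by auto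
      then show "\<bar>E (\<phi> + \<psi>) - (E \<phi> + E \<psi>)\<bar> \<le> 3 * d"
        by (simp add: plus_blinfun.rep_eq) linarith
    qed simp
    then show ?thesis by simp
  qed
  have Esc: "E (r *\<^sub>R \<phi>) = r *\<^sub>R E \<phi>" for r \<phi>
  proof -
    have "E (r *\<^sub>R \<phi>) - r * E \<phi> = 0"
    proof (rule small_zero[of "1 + \<bar>r\<bar>"])
      fix d :: real assume "d > 0"
      then obtain i where i: "\<forall>\<theta>\<in>{\<phi>, r *\<^sub>R \<phi>}. \<bar>blinfun_apply \<theta> (e i) - E \<theta>\<bar> < d"
        using approx[of "{\<phi>, r *\<^sub>R \<phi>}" d undefined] by auto
      then have h1: "\<bar>r * blinfun_apply \<phi> (e i) - E (r *\<^sub>R \<phi>)\<bar> < d"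
        and h2: "\<bar>blinfun_apply \<phi> (e i) - E \<phi>\<bar> < d" by (auto simp: scaleR_blinfun.rep_eq)
      have "\<bar>r * blinfun_apply \<phi> (e i) - r * E \<phi>\<bar> = \<bar>r\<bar> * \<bar>blinfun_apply \<phi> (e i) - E \<phi>\<bar>"
        by (simp add: abs_mult[symmetric] right_diff_distrib)
      also have "\<dots> \<le> \<bar>r\<bar> * d" using h2 by (simp add: mult_left_mono)
      finally have h3: "\<bar>r * blinfun_apply \<phi> (e i) - r * E \<phi>\<bar> \<le> \<bar>r\<bar> * d" .
      have "(1 + \<bar>r\<bar>) * d = d + \<bar>r\<bar> * d" by (simp add: distrib_right)
      then show "\<bar>E (r *\<^sub>R \<phi>) - r * E \<phi>\<bar> \<le> (1 + \<bar>r\<bar>) * d"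
        using h1 h3 by linarith
    qed simp
    then show ?thesis by simp
  qed
  have "bounded_linear E"
  proof (rule bounded_linear_intro[where K=M])
    fix x show "norm (E x) \<le> norm x * M" using Etop topT by (simp add: mult_ac)
  qed (simp_all add: Eadd Esc)
  then show ?thesis using approx that by blast
qed


theorem mainTheorem11:
  fixes p :: "'a::{real_normed_algebra, banach} \<Rightarrow> 'b::banach \<Rightarrow> 'b"
    and le :: "'i \<Rightarrow> 'i \<Rightarrow> bool"
    and e :: "'i \<Rightarrow> 'a"
    and b' :: "'b \<Rightarrow>\<^sub>L real"
  assumes "banach_left_module p"
    and "directed_preorder le"
    and "bounded_left_approx_identity p le e"
    and "b' \<in> wap_l p"
  shows "\<forall>b'' :: ('b \<Rightarrow>\<^sub>L real) \<Rightarrow>\<^sub>L real.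
           net_tendsto le (\<lambda>i. blinfun_apply b'' (adj1 p b' (e i))) (blinfun_apply b'' b')"
proof
  fix b'' :: "('b \<Rightarrow>\<^sub>L real) \<Rightarrow>\<^sub>L real"
  have bb: "bounded_bilinear p" using assms(1) unfolding banach_left_module_def by blast
  define q where "q = transp_map p"
  have bq: "bounded_bilinear q" unfolding q_def transp_map_def
    using bounded_bilinear.flip[OF bb] .
  obtain M where M: "\<forall>i. norm (e i) \<le> M" using assms(3) unfolding bounded_left_approx_identity_def by blast
  have conv: "\<And>b. net_tendsto le (\<lambda>i. p (e i) b) b"
    using assms(3) unfolding bounded_left_approx_identity_def by blast
  show "net_tendsto le (\<lambda>i. blinfun_apply b'' (adj1 p b' (e i))) (blinfun_apply b'' b')"
  proof (rule ccontr)
    assume "\<not> ?thesis"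
    then obtain \<epsilon> where \<epsilon>: "\<epsilon> > 0"
      and bad: "\<forall>i0. \<exists>i. le i0 i \<and> \<not> dist (blinfun_apply b'' (adj1 p b' (e i))) (blinfun_apply b'' b') < \<epsilon>"
      unfolding net_tendsto_def by blast
    obtain E :: "('a \<Rightarrow>\<^sub>L real) \<Rightarrow> real" where Elin: "bounded_linear E" and approx:
      "\<And>i0 (F::('a \<Rightarrow>\<^sub>L real) set) (\<delta>::real). finite F \<Longrightarrow> \<delta> > 0 \<Longrightarrow> (\<exists>i. le i0 i \<and>
          \<not> dist (blinfun_apply b'' (adj1 p b' (e i))) (blinfun_apply b'' b') < \<epsilon> \<and>
          (\<forall>\<phi>\<in>F. \<bar>blinfun_apply \<phi> (e i) - E \<phi>\<bar> < \<delta>))"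
    proof (rule cluster_point[OF assms(2) M bad])
      fix E :: "('a \<Rightarrow>\<^sub>L real) \<Rightarrow> real"
      assume a: "bounded_linear E" and b: "\<And>i0 (F::('a \<Rightarrow>\<^sub>L real) set) (\<delta>::real). finite F \<Longrightarrow> \<delta> > 0 \<Longrightarrow> (\<exists>i. le i0 i \<and>
          \<not> dist (blinfun_apply b'' (adj1 p b' (e i))) (blinfun_apply b'' b') < \<epsilon> \<and>
          (\<forall>\<phi>\<in>F. \<bar>blinfun_apply \<phi> (e i) - E \<phi>\<bar> < \<delta>))"
      show thesis by (rule that[OF a b])
    qed
    define X where "X = Blinfun E"
    have XE: "blinfun_apply X = E" unfolding X_def using Elin by (simp add: bounded_linear_Blinfun_apply)
    have step1: "E (adj1 q b' y) = blinfun_apply b' y" for y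
    proof -
      have psi: "blinfun_apply (adj1 q b' y) a = blinfun_apply b' (p a y)" for a
        unfolding adj1_apply[OF bq] by (simp add: q_def transp_map_def)
      have "E (adj1 q b' y) - blinfun_apply b' y = 0"
      proof (rule small_zero[of 2])
        fix d :: real assume d: "d > 0"
        have nb1: "norm b' + 1 > 0" using norm_ge_zero[of b'] by linarith
        have "d / (norm b' + 1) > 0" using d nb1 by (rule divide_pos_pos)
        then obtain i0 where i0: "\<And>i. le i0 i \<Longrightarrow> dist (p (e i) y) y < d / (norm b' + 1)"
          using conv[of y] unfolding net_tendsto_def by blast
        obtain i where i: "le i0 i" "\<bar>blinfun_apply (adj1 q b' y) (e i) - E (adj1 q b' y)\<bar> < d"
          using approx[of "{adj1 q b' y}" d i0] d by auto
        have "\<bar>blinfun_apply b' (p (e i) y) - blinfun_apply b' y\<bar> = \<bar>blinfun_apply b' (p (e i) y - y)\<bar>"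
          by (simp add: blinfun.diff_right)
        also have "\<dots> \<le> norm b' * norm (p (e i) y - y)" using norm_blinfun[of b' "p (e i) y - y"] by simp
        also have "\<dots> \<le> norm b' * (d / (norm b' + 1))"
          using i0[OF i(1)] by (intro mult_left_mono) (auto simp: dist_norm)
        also have "\<dots> \<le> d"
        proof -
          have "norm b' * (d / (norm b' + 1)) = d * (norm b' / (norm b' + 1))" by simp
          also have "\<dots> \<le> d * 1" using d nb1 by (intro mult_left_mono) (auto simp: divide_le_eq_1)
          finally show ?thesis by simp
        qed
        finally have "\<bar>blinfun_apply b' (p (e i) y) - blinfun_apply b' y\<bar> \<le> d" .
        then show "\<bar>E (adj1 q b' y) - blinfun_apply b' y\<bar> \<le> 2 * d"
          using i(2) psi[of "e i"] by linarith
      qed simp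
      then show ?thesis by simp
    qed
    have a2: "adj2 q X b' = b'"
      by (rule blinfun_eqI) (simp add: adj2_apply[OF bq] XE step1)
    define g where "g = adj2 p b'' b'"
    have g: "blinfun_apply g a = blinfun_apply b'' (adj1 p b' a)" for a
      by (simp add: g_def adj2_apply[OF bb])
    have "blinfun_apply (adj3 p X b'') b' = blinfun_apply (adj3_tt p X b'') b'"
      using assms(4) unfolding wap_l_def by blast
    moreover have "blinfun_apply (adj3 q b'' X) b' = blinfun_apply b'' b'"
      by (simp add: adj3_apply[OF bq] a2)
    moreover have "blinfun_apply (adj3 p X b'') b' = E g"
      by (simp add: adj3_apply[OF bb] XE g_def)
    ultimately have Eg: "E g = blinfun_apply b'' b'"
      by (simp add: adj3_tt_def q_def)
    obtain i where i: "\<not> dist (blinfun_apply b'' (adj1 p b' (e i))) (blinfun_apply b'' b') < \<epsilon>"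
      "\<bar>blinfun_apply g (e i) - E g\<bar> < \<epsilon>"
      using approx[of "{g}" \<epsilon> undefined] \<epsilon> by auto
    then show False by (simp add: g Eg dist_real_def)
  qed
qed

end
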